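(* Let $\mathcal C$ be a category all of whose morphisms are monomorphisms and which has binary joins of subobjects, and let $\perp$ be an independence relation on $\mathcal C$ satisfying invariance, monotonicity, transitivity, symmetry, existence, base monotonicity and $3$-amalgamation. Then $\perp$ satisfies strong $3$-amalgamation.
   Context: A commuting square consists of objects $C,A,B,M$ and morphisms $C\to A$, $C\to B$, $A\to M$, $B\to M$ with equal composites $C\to M$. An independence relation $\perp$ is a class of commuting squares (called independent); write $A\perp^M_C B$. Properties (all diagrams commute): Invariance: for a square $C\to A,C\to B,A\to M,B\to M$ and any $M\to N$, $A\perp^M_C B$ iff the square with $A\to M\to N$, $B\to M\to N$ is independent. Monotonicity: if $A\perp^M_C B$ and $C\to B$ factors as $C\to B'\to B$, then the square $C\to A$, $C\to B'$, $A\to M$, $B'\to B\to M$ is independent. Transitivity: if $(C\to A,C\to B,A\to M,B\to M)$ and $(B\to M,B\to D,M\to N,D\to N)$ are independent then so is $(C\to A, C\to B\to D, A\to M\to N, D\to N)$. Symmetry: $A\perp^M_C B$ iff $B\perp^M_C A$. Existence: every span $A\leftarrow C\to B$ can be completed to an independent square. Base monotonicity: if $A\perp^M_C D$ and $C\to D$ factors as $C\to B\to D$, then there are $A',N$ and morphisms $A\to A'$, $B\to A'$, $A'\to N$, $M\to N$ making everything commute such that the square $B\to A'$, $B\to D$, $A'\to N$, $D\to M\to N$ is independent. A horn consists of morphisms $M\to A$, $M\to B$, $M\to C$, $A\to N_1$, $B\to N_1$, $A\to N_2$, $C\to N_2$, $B\to N_3$, $C\to N_3$ with the three squares (tops $N_1,N_2,N_3$)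 commuting; it is independent if these three squares are. $3$-amalgamation: for every independent horn there are $N$ and $N_i\to N$ ($i=1,2,3$) making the cube commute and with $A\perp^N_M N_3$ (square $M\to A$, $M\to N_3$, $A\to N$, $N_3\to N$). Strong $3$-amalgamation: for every independent horn there are $N$ and $N_i\to N$ making the cube commute and such that all six faces of the cube are independent. Binary joins of subobjects: any two subobjects of an object have a least upper bound among subobjects. *)

theory Defs
  imports Main
begin

record ('o, 'm) cat =
  Obj  :: "'o set"
  Mor  :: "'m set"
  Dom  :: "'m \<Rightarrow> 'o"
  Cod  :: "'m \<Rightarrow> 'o"
  Comp :: "'m \<Rightarrow> 'm \<Rightarrow> 'm"   (* Comp C g f = g \<circ> f, defined when Cod f = Dom g *)
  Ident :: "'o \<Rightarrow> 'm"

definition category :: "('o, 'm) cat \<Rightarrow> bool" where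
  "category C \<longleftrightarrow>
     (\<forall>f\<in>Mor C. Dom C f \<in> Obj C \<and> Cod C f \<in> Obj C)
   \<and> (\<forall>A\<in>Obj C. Ident C A \<in> Mor C \<and> Dom C (Ident C A) = A \<and> Cod C (Ident C A) = A)
   \<and> (\<forall>f\<in>Mor C. \<forall>g\<in>Mor C. Cod C f = Dom C g \<longrightarrow>
        Comp C g f \<in> Mor C \<and> Dom C (Comp C g f) = Dom C f \<and> Cod C (Comp C g f) = Cod C g)
   \<and> (\<forall>f\<in>Mor C. Comp C (Ident C (Cod C f)) f = f \<and> Comp C f (Ident C (Dom C f)) = f)
   \<and> (\<forall>f\<in>Mor C. \<forall>g\<in>Mor C. \<forall>h\<in>Mor C. Cod C f = Dom C g \<and> Cod C g = Dom C h \<longrightarrow>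
        Comp C h (Comp C g f) = Comp C (Comp C h g) f)"

definition mono :: "('o, 'm) cat \<Rightarrow> 'm \<Rightarrow> bool" where
  "mono C f \<longleftrightarrow> f \<in> Mor C \<and>
     (\<forall>g\<in>Mor C. \<forall>h\<in>Mor C. Dom C g = Dom C h \<and> Cod C g = Dom C f \<and> Cod C h = Dom C f
        \<and> Comp C f g = Comp C f h \<longrightarrow> g = h)"

definition all_mono :: "('o, 'm) cat \<Rightarrow> bool" where
  "all_mono C \<longleftrightarrow> (\<forall>f\<in>Mor C. mono C f)"

text \<open>Order on subobjects (represented by monomorphisms into a fixed object):
  m factors through n.\<close>
definition factors_through :: "('o, 'm) cat \<Rightarrow> 'm \<Rightarrow> 'm \<Rightarrow> bool" where
  "factors_through C m n \<longleftrightarrow> Cod C m = Cod C n \<and>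
     (\<exists>k\<in>Mor C. Dom C k = Dom C m \<and> Cod C k = Dom C n \<and> Comp C n k = m)"

definition has_binary_joins :: "('o, 'm) cat \<Rightarrow> bool" where
  "has_binary_joins C \<longleftrightarrow>
     (\<forall>m1 m2. mono C m1 \<and> mono C m2 \<and> Cod C m1 = Cod C m2 \<longrightarrow>
        (\<exists>j. mono C j \<and> Cod C j = Cod C m1 \<and> factors_through C m1 j \<and> factors_through C m2 j \<and>
           (\<forall>n. mono C n \<and> Cod C n = Cod C m1 \<and> factors_through C m1 n \<and> factors_through C m2 n
                 \<longrightarrow> factors_through C j n)))"

text \<open>Square (f: C\<rightarrow>A, g: C\<rightarrow>B, h: A\<rightarrow>M, k: B\<rightarrow>M) with h\<circ>f = k\<circ>g.
  A predicate Ind on such quadruples is read as A \<perp>^M_C B.\<close>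
definition comm_square :: "('o, 'm) cat \<Rightarrow> 'm \<Rightarrow> 'm \<Rightarrow> 'm \<Rightarrow> 'm \<Rightarrow> bool" where
  "comm_square C f g h k \<longleftrightarrow> f \<in> Mor C \<and> g \<in> Mor C \<and> h \<in> Mor C \<and> k \<in> Mor C \<and>
     Dom C f = Dom C g \<and> Cod C f = Dom C h \<and> Cod C g = Dom C k \<and> Cod C h = Cod C k \<and>
     Comp C h f = Comp C k g"

definition indep_relation :: "('o, 'm) cat \<Rightarrow> ('m \<Rightarrow> 'm \<Rightarrow> 'm \<Rightarrow> 'm \<Rightarrow> bool) \<Rightarrow> bool" where
  "indep_relation C Ind \<longleftrightarrow> (\<forall>f g h k. Ind f g h k \<longrightarrow> comm_square C f g h k)"

definition invariance where
  "invariance C Ind \<longleftrightarrow> (\<forall>f g h k n. comm_square C f g h k \<and> n \<in> Mor C \<and> Dom C n = Cod C h \<longrightarrow>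
      (Ind f g h k \<longleftrightarrow> Ind f g (Comp C n h) (Comp C n k)))"

definition monotonicity where
  "monotonicity C Ind \<longleftrightarrow> (\<forall>f g h k g' b. Ind f g h k \<and> g' \<in> Mor C \<and> b \<in> Mor C \<and>
      Dom C g' = Dom C g \<and> Cod C g' = Dom C b \<and> Cod C b = Cod C g \<and> Comp C b g' = g \<longrightarrow>
      Ind f g' h (Comp C k b))"

definition transitivity where
  "transitivity C Ind \<longleftrightarrow> (\<forall>f g h k d m e. Ind f g h k \<and> Ind k d m e \<longrightarrow>
      Ind f (Comp C d g) (Comp C m h) e)"

definition symmetry where
  "symmetry C Ind \<longleftrightarrow> (\<forall>f g h k. Ind f g h k \<longleftrightarrow> Ind g f k h)"

definition existence where
  "existence C Ind \<longleftrightarrow> (\<forall>f\<in>Mor C. \<forall>g\<in>Mor C. Dom C f = Dom C g \<longrightarrow> (\<exists>h k. Ind f g h k))"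

text \<open>Base monotonicity: A \<perp>^M_C D via (f,d,h,k) with d = b2\<circ>b1 (b1: C\<rightarrow>B, b2: B\<rightarrow>D).\<close>
definition base_monotonicity where
  "base_monotonicity C Ind \<longleftrightarrow> (\<forall>f d h k b1 b2. Ind f d h k \<and> b1 \<in> Mor C \<and> b2 \<in> Mor C \<and>
      Dom C b1 = Dom C d \<and> Cod C b1 = Dom C b2 \<and> Cod C b2 = Cod C d \<and> Comp C b2 b1 = d \<longrightarrow>
      (\<exists>a b' a' n. a \<in> Mor C \<and> b' \<in> Mor C \<and> a' \<in> Mor C \<and> n \<in> Mor C \<and>
         Dom C a = Cod C f \<and> Dom C b' = Cod C b1 \<and> Cod C a = Cod C b' \<and> Dom C a' = Cod C a \<and>
         Dom C n = Cod C h \<and> Cod C n = Cod C a' \<and>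
         Comp C a f = Comp C b' b1 \<and> Comp C a' a = Comp C n h \<and>
         Comp C a' b' = Comp C n (Comp C k b2) \<and>
         Ind b' b2 a' (Comp C n k)))"

text \<open>Horn: a: M\<rightarrow>A, b: M\<rightarrow>B, c: M\<rightarrow>C, a1: A\<rightarrow>N1, b1: B\<rightarrow>N1, a2: A\<rightarrow>N2, c2: C\<rightarrow>N2,
  b3: B\<rightarrow>N3, c3: C\<rightarrow>N3.\<close>
definition indep_horn where
  "indep_horn Ind a b c a1 b1 a2 c2 b3 c3 \<longleftrightarrow>
     Ind a b a1 b1 \<and> Ind a c a2 c2 \<and> Ind b c b3 c3"

definition cube_commutes where
  "cube_commutes C a1 b1 a2 c2 b3 c3 n1 n2 n3 \<longleftrightarrow>
     n1 \<in> Mor C \<and> n2 \<in> Mor C \<and> n3 \<in> Mor C \<and>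
     Dom C n1 = Cod C a1 \<and> Dom C n2 = Cod C a2 \<and> Dom C n3 = Cod C b3 \<and>
     Cod C n1 = Cod C n2 \<and> Cod C n2 = Cod C n3 \<and>
     Comp C n1 a1 = Comp C n2 a2 \<and> Comp C n1 b1 = Comp C n3 b3 \<and> Comp C n2 c2 = Comp C n3 c3"

definition three_amalgamation where
  "three_amalgamation C Ind \<longleftrightarrow> (\<forall>a b c a1 b1 a2 c2 b3 c3.
     indep_horn Ind a b c a1 b1 a2 c2 b3 c3 \<longrightarrow>
     (\<exists>n1 n2 n3. cube_commutes C a1 b1 a2 c2 b3 c3 n1 n2 n3 \<and>
        Ind a (Comp C b3 b) (Comp C n1 a1) n3))"

definition strong_three_amalgamation where
  "strong_three_amalgamation C Ind \<longleftrightarrow> (\<forall>a b c a1 b1 a2 c2 b3 c3.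
     indep_horn Ind a b c a1 b1 a2 c2 b3 c3 \<longrightarrow>
     (\<exists>n1 n2 n3. cube_commutes C a1 b1 a2 c2 b3 c3 n1 n2 n3 \<and>
        Ind a b a1 b1 \<and> Ind a c a2 c2 \<and> Ind b c b3 c3 \<and>
        Ind a1 a2 n1 n2 \<and> Ind b1 b3 n1 n3 \<and> Ind c2 c3 n2 n3))"

end

theory Submission
  imports Defs
begin

definition gen :: "('o, 'm) cat \<Rightarrow> 'm \<Rightarrow> 'm \<Rightarrow> bool" where
  "gen C zx zy \<longleftrightarrow> (\<forall>\<kappa>. \<kappa> \<in> Mor C \<and> Cod C \<kappa> = Cod C zx \<and> factors_through C zx \<kappa> \<and> factors_through C zy \<kappa>
      \<longrightarrow> factors_through C (Ident C (Cod C zx)) \<kappa>)"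

locale S =
  fixes C :: "('o, 'm) cat" and Ind :: "'m \<Rightarrow> 'm \<Rightarrow> 'm \<Rightarrow> 'm \<Rightarrow> bool"
  assumes cat: "category C"
    and am: "all_mono C"
    and joins: "has_binary_joins C"
    and ir: "indep_relation C Ind"
    and inv: "invariance C Ind"
    and mon: "monotonicity C Ind"
    and tr: "transitivity C Ind"
    and sy: "symmetry C Ind"
    and ex: "existence C Ind"
    and bm: "base_monotonicity C Ind"
    and ta: "three_amalgamation C Ind"
begin

lemma cM[simp]: "f \<in> Mor C \<Longrightarrow> g \<in> Mor C \<Longrightarrow> Cod C f = Dom C g \<Longrightarrow> Comp C g f \<in> Mor C"
  using cat unfolding category_def by blast
lemma cD[simp]: "f \<in> Mor C \<Longrightarrow> g \<in> Mor C \<Longrightarrow> Cod C f = Dom C g \<Longrightarrow> Dom C (Comp C g f) = Dom C f"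
  using cat unfolding category_def by blast
lemma cC[simp]: "f \<in> Mor C \<Longrightarrow> g \<in> Mor C \<Longrightarrow> Cod C f = Dom C g \<Longrightarrow> Cod C (Comp C g f) = Cod C g"
  using cat unfolding category_def by blast
lemma assoc: "f \<in> Mor C \<Longrightarrow> g \<in> Mor C \<Longrightarrow> h \<in> Mor C \<Longrightarrow> Cod C f = Dom C g \<Longrightarrow> Cod C g = Dom C h \<Longrightarrow>
   Comp C h (Comp C g f) = Comp C (Comp C h g) f"
  using cat unfolding category_def by blast
lemma idr: "f \<in> Mor C \<Longrightarrow> Comp C f (Ident C (Dom C f)) = f"
  using cat unfolding category_def by blast
lemma idD: "f \<in> Mor C \<Longrightarrow> Dom C (Ident C (Dom C f)) = Dom C f \<and> Cod C (Ident C (Dom C f)) = Dom C f"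
  using cat unfolding category_def by blast
lemma idM: "f \<in> Mor C \<Longrightarrow> Ident C (Dom C f) \<in> Mor C"
  using cat unfolding category_def by blast
lemma cancel: "k \<in> Mor C \<Longrightarrow> f \<in> Mor C \<Longrightarrow> g \<in> Mor C \<Longrightarrow> Dom C f = Dom C g \<Longrightarrow> Cod C f = Dom C k \<Longrightarrow>
   Cod C g = Dom C k \<Longrightarrow> Comp C k f = Comp C k g \<Longrightarrow> f = g"
  using am unfolding all_mono_def mono_def by metis
lemma sq: "Ind f g h k \<Longrightarrow> comm_square C f g h k"
  using ir unfolding indep_relation_def by blast
lemma sym: "Ind f g h k \<Longrightarrow> Ind g f k h"
  using sy unfolding symmetry_def by blast
lemma trans: "Ind f g h k \<Longrightarrow> Ind k d m e \<Longrightarrow> Ind f (Comp C d g) (Comp C m h) e"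
  using tr unfolding transitivity_def by blast
lemma invr: "Ind f g h k \<Longrightarrow> n \<in> Mor C \<Longrightarrow> Dom C n = Cod C h \<Longrightarrow> Ind f g (Comp C n h) (Comp C n k)"
  using inv sq unfolding invariance_def by blast
lemma invl: "comm_square C f g h k \<Longrightarrow> Ind f g (Comp C n h) (Comp C n k) \<Longrightarrow> n \<in> Mor C \<Longrightarrow> Dom C n = Cod C h \<Longrightarrow> Ind f g h k"
  using inv unfolding invariance_def by blast


lemma L:
  assumes I: "Ind x (Comp C q y) h k" and y: "y \<in> Mor C" and q: "q \<in> Mor C" and yq: "Cod C y = Dom C q"
    and z: "z \<in> Mor C" and zx: "zx \<in> Mor C" and zy: "zy \<in> Mor C"
    and zxz: "Cod C zx = Dom C z" and zyz: "Cod C zy = Dom C z"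
    and dzx: "Dom C zx = Cod C x" and dzy: "Dom C zy = Cod C y"
    and e1: "Comp C z zx = h" and e2: "Comp C z zy = Comp C k q"
    and g: "gen C zx zy"
  shows "Ind zy q z k"
proof -
  have s: "comm_square C x (Comp C q y) h k" using sq I .
  hence x: "x \<in> Mor C" and h: "h \<in> Mor C" and k: "k \<in> Mor C" and xh: "Cod C x = Dom C h"
    and qk: "Cod C q = Dom C k" and hk: "Cod C h = Cod C k" and xy: "Dom C x = Dom C y"
    using y q yq unfolding comm_square_def by auto
  obtain \<alpha> \<beta> a' n where al: "\<alpha> \<in> Mor C" and be: "\<beta> \<in> Mor C" and a': "a' \<in> Mor C" and n: "n \<in> Mor C"
    and t1: "Dom C \<alpha> = Cod C x" and t2: "Dom C \<beta> = Cod C y" and t3: "Cod C \<alpha> = Cod C \<beta>" and t4: "Dom C a' = Cod C \<alpha>"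
    and t5: "Dom C n = Cod C h" and t6: "Cod C n = Cod C a'"
    and q1: "Comp C \<alpha> x = Comp C \<beta> y" and q2: "Comp C a' \<alpha> = Comp C n h"
    and q3: "Comp C a' \<beta> = Comp C n (Comp C k q)" and J: "Ind \<beta> q a' (Comp C n k)"
    using bm[unfolded base_monotonicity_def, rule_format, of x "Comp C q y" h k y q] I y q yq by auto
  have hz: "Cod C z = Cod C h" using e1 zx z zxz by (metis cC)
  have m1: "mono C (Comp C n h)" using am n h t5 unfolding all_mono_def by simp
  have m2: "mono C (Comp C n (Comp C k q))" using am n k q qk t5 hk unfolding all_mono_def by simp
  have cc: "Cod C (Comp C n h) = Cod C (Comp C n (Comp C k q))" using n k q qk t5 hk h by simp
  obtain j where j: "mono C j" and jc: "Cod C j = Cod C (Comp C n h)"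
    and f1: "factors_through C (Comp C n h) j" and f2: "factors_through C (Comp C n (Comp C k q)) j"
    and jmin: "\<And>m. mono C m \<Longrightarrow> Cod C m = Cod C (Comp C n h) \<Longrightarrow> factors_through C (Comp C n h) m \<Longrightarrow>
        factors_through C (Comp C n (Comp C k q)) m \<Longrightarrow> factors_through C j m"
    using joins[unfolded has_binary_joins_def, rule_format, OF conjI[OF m1 conjI[OF m2 cc]]] by blast
  have jM: "j \<in> Mor C" using j unfolding mono_def by blast
  have "factors_through C j a'"
  proof (rule jmin)
    show "mono C a'" using am a' unfolding all_mono_def by blast
    show "Cod C a' = Cod C (Comp C n h)" using n h t5 t6 by simp
    show "factors_through C (Comp C n h) a'" unfolding factors_through_def
      using n h t5 t6 al t1 t4 q2 xh by (intro conjI bexI[of _ \<alpha>]) auto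
    show "factors_through C (Comp C n (Comp C k q)) a'" unfolding factors_through_def
      using n h t5 t6 be t2 t3 t4 q3 k q qk hk yq by (intro conjI bexI[of _ \<beta>]) auto
  qed
  then obtain u where u: "u \<in> Mor C" and du: "Dom C u = Dom C j" and cu: "Cod C u = Dom C a'" and eu: "Comp C a' u = j"
    unfolding factors_through_def by blast
  have nz: "Comp C n z \<in> Mor C" "Dom C (Comp C n z) = Dom C z" "Cod C (Comp C n z) = Cod C n"
    using n z hz t5 by auto
  have "factors_through C j (Comp C n z)"
  proof (rule jmin)
    show "mono C (Comp C n z)" using am nz unfolding all_mono_def by blast
    show "Cod C (Comp C n z) = Cod C (Comp C n h)" using nz n h t5 by simp
    show "factors_through C (Comp C n h) (Comp C n z)" unfolding factors_through_def
    proof (intro conjI bexI[of _ zx])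
      show "Comp C (Comp C n z) zx = Comp C n h" using assoc[OF zx z n zxz] hz t5 e1 by simp
    qed (use n h t5 nz z zx zxz e1 in auto)
    show "factors_through C (Comp C n (Comp C k q)) (Comp C n z)" unfolding factors_through_def
    proof (intro conjI bexI[of _ zy])
      show "Comp C (Comp C n z) zy = Comp C n (Comp C k q)" using assoc[OF zy z n zyz] hz t5 e2 by simp
    qed (use n h t5 nz z zy zyz e2 k q qk hk dzy yq in auto)
  qed
  then obtain \<kappa> where ka: "\<kappa> \<in> Mor C" and dk: "Dom C \<kappa> = Dom C j" and ck: "Cod C \<kappa> = Dom C z"
     and ek: "Comp C (Comp C n z) \<kappa> = j"
    using nz unfolding factors_through_def by auto
  have fk: "factors_through C w \<kappa>" if w: "w \<in> Mor C" "Cod C w = Dom C z" "Comp C n (Comp C z w) = h'"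
     and fh: "factors_through C h' j" for w h'
  proof -
    from fh obtain x' where x': "x' \<in> Mor C" "Dom C x' = Dom C h'" "Cod C x' = Dom C j" "Comp C j x' = h'"
      unfolding factors_through_def by blast
    have "Comp C (Comp C n z) (Comp C \<kappa> x') = Comp C j x'"
      using assoc[OF x'(1) ka nz(1)] x' dk ck nz ek by simp
    also have "\<dots> = Comp C (Comp C n z) w" using x' w assoc[OF w(1) z n] hz t5 by simp
    finally have eq: "Comp C (Comp C n z) (Comp C \<kappa> x') = Comp C (Comp C n z) w" .
    have dw: "Dom C w = Dom C h'" using w(3)[symmetric] w(1,2) z n hz t5 by simp
    have "Comp C \<kappa> x' = w"
      using cancel[OF nz(1) _ w(1) _ _ _ eq] ka x' dk ck w nz dw by simp
    moreover note dw
    ultimately show ?thesis unfolding factors_through_def using ck w x' ka dk by (intro conjI bexI[of _ x']) auto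
  qed
  have "factors_through C zx \<kappa>" using fk[of zx "Comp C n h"] zx zxz e1 f1 by simp
  moreover have "factors_through C zy \<kappa>" using fk[of zy "Comp C n (Comp C k q)"] zy zyz e2 f2 by simp
  ultimately have "factors_through C (Ident C (Cod C zx)) \<kappa>" using g[unfolded gen_def, rule_format, of \<kappa>] ka ck zxz by simp
  then obtain s where s: "s \<in> Mor C" "Cod C s = Dom C \<kappa>" "Comp C \<kappa> s = Ident C (Dom C z)" "Dom C s = Dom C z"
    using zxz idD[OF z] unfolding factors_through_def by auto
  define t where "t = Comp C u s"
  have tM: "t \<in> Mor C" "Dom C t = Dom C z" "Cod C t = Dom C a'" using u s du dk cu unfolding t_def by auto
  have at: "Comp C a' t = Comp C n z"
  proof -
    have "Comp C a' t = Comp C j s" unfolding t_def using assoc[OF s(1) u a'] s du dk cu eu by simp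
    also have "\<dots> = Comp C (Comp C n z) (Comp C \<kappa> s)" using assoc[OF s(1) ka nz(1)] ek s ck nz by simp
    also have "\<dots> = Comp C n z" using s idr[OF nz(1)] nz by simp
    finally show ?thesis .
  qed
  have "Comp C a' (Comp C t zy) = Comp C (Comp C a' t) zy"
    using assoc[OF zy tM(1) a'] tM zyz by simp
  also have "\<dots> = Comp C (Comp C n z) zy" using at by simp
  also have "\<dots> = Comp C n (Comp C z zy)" using assoc[OF zy z n zyz] hz t5 by simp
  also have "\<dots> = Comp C a' \<beta>" using e2 q3 by simp
  finally have tzb: "Comp C a' (Comp C t zy) = Comp C a' \<beta>" .
  have tb: "Comp C t zy = \<beta>"
    by (rule cancel[OF a' _ be _ _ _ tzb]) (use tM zy zyz be t2 dzy t3 t4 in auto)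
  have "Ind q \<beta> (Comp C n k) a'" using sym J .
  hence "Ind q zy (Comp C n k) (Comp C a' t)"
    using mon[unfolded monotonicity_def, rule_format, of q \<beta> "Comp C n k" a' zy t] zy tM tb zyz
    using tM(3) be t4 t3 by auto
  hence I2: "Ind q zy (Comp C n k) (Comp C n z)" using at by simp
  have cs: "comm_square C q zy k z" unfolding comm_square_def
    using q zy k z yq dzy qk zyz hz hk e2 by auto
  have "Ind q zy k z" using invl[OF cs I2 n] t5 hk by simp
  thus ?thesis using sym by blast
qed


lemma gen_swap: "gen C x y \<Longrightarrow> Cod C x = Cod C y \<Longrightarrow> gen C y x"
  unfolding gen_def by (simp add: conj_ac)

lemma R:
  assumes I: "Ind a b a1 b1"
  obtains j a1' b1' where "j \<in> Mor C" "a1' \<in> Mor C" "b1' \<in> Mor C" "Cod C a1' = Dom C j" "Cod C b1' = Dom C j"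
    "Dom C a1' = Cod C a" "Dom C b1' = Cod C b" "Comp C j a1' = a1" "Comp C j b1' = b1"
    "Ind a b a1' b1'" "gen C a1' b1'"
proof -
  have "comm_square C a b a1 b1" using sq I .
  hence a: "a \<in> Mor C" and b: "b \<in> Mor C" and a1: "a1 \<in> Mor C" and b1: "b1 \<in> Mor C"
    and ab: "Dom C a = Dom C b" and aa: "Cod C a = Dom C a1" and bb: "Cod C b = Dom C b1"
    and cc: "Cod C a1 = Cod C b1" and e: "Comp C a1 a = Comp C b1 b"
    unfolding comm_square_def by auto
  have m1: "mono C a1" "mono C b1" using am a1 b1 unfolding all_mono_def by auto
  obtain j where j: "mono C j" and jc: "Cod C j = Cod C a1"
    and f1: "factors_through C a1 j" and f2: "factors_through C b1 j"
    and jmin: "\<And>m. mono C m \<Longrightarrow> Cod C m = Cod C a1 \<Longrightarrow> factors_through C a1 m \<Longrightarrow>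
        factors_through C b1 m \<Longrightarrow> factors_through C j m"
    using joins[unfolded has_binary_joins_def, rule_format, OF conjI[OF m1(1) conjI[OF m1(2) cc]]] by blast
  have jM: "j \<in> Mor C" using j unfolding mono_def by blast
  obtain a1' where a1': "a1' \<in> Mor C" "Dom C a1' = Dom C a1" "Cod C a1' = Dom C j" "Comp C j a1' = a1"
    using f1 unfolding factors_through_def by blast
  obtain b1' where b1': "b1' \<in> Mor C" "Dom C b1' = Dom C b1" "Cod C b1' = Dom C j" "Comp C j b1' = b1"
    using f2 unfolding factors_through_def by blast
  have "Comp C j (Comp C a1' a) = Comp C j (Comp C b1' b)"
    using assoc[OF a a1'(1) jM] assoc[OF b b1'(1) jM] a1' b1' aa bb e by simp
  hence e': "Comp C a1' a = Comp C b1' b"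
    by (rule cancel[OF jM, rotated 5]) (use a b a1' b1' aa bb ab in auto)
  have cs: "comm_square C a b a1' b1'" unfolding comm_square_def
    using a b a1' b1' aa bb ab e' by auto
  have I': "Ind a b a1' b1'" using invl[OF cs _ jM] I a1' b1' by simp
  have g: "gen C a1' b1'" unfolding gen_def
  proof (intro allI impI, elim conjE)
    fix \<kappa> assume ka: "\<kappa> \<in> Mor C" and ck: "Cod C \<kappa> = Cod C a1'"
      and fa: "factors_through C a1' \<kappa>" and fb: "factors_through C b1' \<kappa>"
    obtain x' where x': "x' \<in> Mor C" "Dom C x' = Dom C a1'" "Cod C x' = Dom C \<kappa>" "Comp C \<kappa> x' = a1'"
      using fa unfolding factors_through_def by blast
    obtain y' where y': "y' \<in> Mor C" "Dom C y' = Dom C b1'" "Cod C y' = Dom C \<kappa>" "Comp C \<kappa> y' = b1'"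
      using fb unfolding factors_through_def by blast
    have jk: "Comp C j \<kappa> \<in> Mor C" "Dom C (Comp C j \<kappa>) = Dom C \<kappa>" "Cod C (Comp C j \<kappa>) = Cod C j"
      using ka jM ck a1' by auto
    have "factors_through C j (Comp C j \<kappa>)"
    proof (rule jmin)
      show "mono C (Comp C j \<kappa>)" using am jk unfolding all_mono_def by blast
      show "Cod C (Comp C j \<kappa>) = Cod C a1" using jk jc by simp
      show "factors_through C a1 (Comp C j \<kappa>)" unfolding factors_through_def
        using jk jc x' a1' assoc[OF x'(1) ka jM] ck by (intro conjI bexI[of _ x']) auto
      have hck: "Cod C \<kappa> = Dom C j" using ck a1'(3) by simp
      have ey: "Comp C (Comp C j \<kappa>) y' = b1" using assoc[OF y'(1) ka jM y'(3) hck] y'(4) b1'(4) by simp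
      have dy: "Dom C y' = Dom C b1" using y'(2) b1'(2) by simp
      have cb: "Cod C b1 = Cod C (Comp C j \<kappa>)" using jk(3) jc cc by simp
      show "factors_through C b1 (Comp C j \<kappa>)" unfolding factors_through_def
      proof (intro conjI cb bexI[of _ y'])
        show "Cod C y' = Dom C (Comp C j \<kappa>)" using y'(3) jk(2) by simp
      qed (fact dy ey y'(1))+
    qed
    then obtain s where s: "s \<in> Mor C" "Dom C s = Dom C j" "Cod C s = Dom C \<kappa>" "Comp C (Comp C j \<kappa>) s = j"
      using jk unfolding factors_through_def by auto
    have "Comp C j (Comp C \<kappa> s) = Comp C j (Ident C (Dom C j))"
      using assoc[OF s(1) ka jM] s ck a1' idr[OF jM] by simp
    hence ks: "Comp C \<kappa> s = Ident C (Dom C j)"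
      by (rule cancel[OF jM, rotated 5]) (use s ka ck a1' idM[OF jM] idD[OF jM] in auto)
    show "factors_through C (Ident C (Cod C a1')) \<kappa>" unfolding factors_through_def
      using idD[OF jM] idM[OF jM] s ks ck a1' by (intro conjI bexI[of _ s]) auto
  qed
  show ?thesis using that[OF jM a1'(1) b1'(1) a1'(3) b1'(3) _ _ a1'(4) b1'(4) I' g] a1' b1' aa bb by simp
qed


lemma P:
  assumes A: "Ind a b a1 b1" and B: "Ind a c a2 c2" and Cc: "Ind b c b3 c3"
    and g1: "gen C a1 b1" and g2: "gen C a2 c2"
  obtains m1 m2 m3 where "cube_commutes C a1 b1 a2 c2 b3 c3 m1 m2 m3"
    "Ind a1 a2 m1 m2" "Ind b1 b3 m1 m3" "Ind c2 c3 m2 m3"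
proof -
  have sA: "comm_square C a b a1 b1" using sq A .
  have sB: "comm_square C a c a2 c2" using sq B .
  have sC: "comm_square C b c b3 c3" using sq Cc .
  obtain m1 m2 m3 where cube: "cube_commutes C a1 b1 a2 c2 b3 c3 m1 m2 m3"
    and I: "Ind a (Comp C b3 b) (Comp C m1 a1) m3"
    using ta[unfolded three_amalgamation_def indep_horn_def, rule_format, OF conjI[OF A conjI[OF B Cc]]] by blast
  note cu = cube[unfolded cube_commutes_def]
  have fB: "Ind b1 b3 m1 m3"
    by (rule L[OF I, where z=m1 and zx=a1 and zy=b1]) (use sA sB sC cu g1 in \<open>auto simp: comm_square_def\<close>)
  have I2: "Ind a (Comp C c3 c) (Comp C m1 a1) m3" using I sC unfolding comm_square_def by simp
  have fC: "Ind c2 c3 m2 m3"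
    by (rule L[OF I2, where z=m2 and zx=a2 and zy=c2]) (use sA sB sC cu g2 in \<open>auto simp: comm_square_def\<close>)
  have "Ind b (Comp C c2 c) (Comp C m3 b3) m2" using trans[OF Cc sym[OF fC]] .
  hence I3: "Ind b (Comp C a2 a) (Comp C m3 b3) m2" using sB unfolding comm_square_def by simp
  have g1': "gen C b1 a1" using gen_swap[OF g1] sA unfolding comm_square_def by simp
  have fA: "Ind a1 a2 m1 m2"
    by (rule L[OF I3, where z=m1 and zx=b1 and zy=a1]) (use sA sB sC cu g1' in \<open>auto simp: comm_square_def\<close>)
  show ?thesis using that[OF cube fA fB fC] .
qed


lemma ra: "f \<in> Mor C \<Longrightarrow> g \<in> Mor C \<Longrightarrow> h \<in> Mor C \<Longrightarrow> Cod C f = Dom C g \<Longrightarrow> Cod C g = Dom C h \<Longrightarrow>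
   Comp C (Comp C h g) f = Comp C h (Comp C g f)"
  by (rule HOL.sym, rule assoc)

lemma ext2: "Comp C h g = Comp C h' g' \<Longrightarrow> f \<in> Mor C \<Longrightarrow> g \<in> Mor C \<Longrightarrow> h \<in> Mor C \<Longrightarrow> g' \<in> Mor C \<Longrightarrow> h' \<in> Mor C \<Longrightarrow>
   Cod C f = Dom C g \<Longrightarrow> Cod C g = Dom C h \<Longrightarrow> Cod C f = Dom C g' \<Longrightarrow> Cod C g' = Dom C h' \<Longrightarrow>
   Comp C h (Comp C g f) = Comp C h' (Comp C g' f)"
proof -
  assume a: "Comp C h g = Comp C h' g'" "f \<in> Mor C" "g \<in> Mor C" "h \<in> Mor C" "g' \<in> Mor C" "h' \<in> Mor C"
   "Cod C f = Dom C g" "Cod C g = Dom C h" "Cod C f = Dom C g'" "Cod C g' = Dom C h'"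
  have "Comp C h (Comp C g f) = Comp C (Comp C h g) f" using assoc[OF a(2,3,4,7,8)] .
  also have "\<dots> = Comp C (Comp C h' g') f" using a(1) by simp
  also have "\<dots> = Comp C h' (Comp C g' f)" using assoc[OF a(2,5,6,9,10)] by simp
  finally show ?thesis .
qed

theorem main: "strong_three_amalgamation C Ind"
  unfolding strong_three_amalgamation_def indep_horn_def
proof (intro allI impI, elim conjE)
  fix a b c a1 b1 a2 c2 b3 c3
  assume A: "Ind a b a1 b1" and B: "Ind a c a2 c2" and Cc: "Ind b c b3 c3"
  have sA: "comm_square C a b a1 b1" using sq A .
  have sB: "comm_square C a c a2 c2" using sq B .
  have sC: "comm_square C b c b3 c3" using sq Cc .
  obtain j1 a1' b1' where j1: "j1 \<in> Mor C" "a1' \<in> Mor C" "b1' \<in> Mor C" "Cod C a1' = Dom C j1" "Cod C b1' = Dom C j1"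
    "Dom C a1' = Cod C a" "Dom C b1' = Cod C b" "Comp C j1 a1' = a1" "Comp C j1 b1' = b1"
    and A': "Ind a b a1' b1'" and g1: "gen C a1' b1'" using R[OF A] by blast
  obtain j2 a2' c2' where j2: "j2 \<in> Mor C" "a2' \<in> Mor C" "c2' \<in> Mor C" "Cod C a2' = Dom C j2" "Cod C c2' = Dom C j2"
    "Dom C a2' = Cod C a" "Dom C c2' = Cod C c" "Comp C j2 a2' = a2" "Comp C j2 c2' = c2"
    and B': "Ind a c a2' c2'" and g2: "gen C a2' c2'" using R[OF B] by blast
  obtain m1 m2 m3 where cube: "cube_commutes C a1' b1' a2' c2' b3 c3 m1 m2 m3"
    and fA: "Ind a1' a2' m1 m2" and fB: "Ind b1' b3 m1 m3" and fC: "Ind c2' c3 m2 m3"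
    using P[OF A' B' Cc g1 g2] by blast
  have m: "m1 \<in> Mor C" "m2 \<in> Mor C" "m3 \<in> Mor C" "Dom C m1 = Dom C j1" "Dom C m2 = Dom C j2"
     "Dom C m3 = Cod C b3" "Cod C m1 = Cod C m2" "Cod C m2 = Cod C m3"
     "Comp C m1 a1' = Comp C m2 a2'" "Comp C m1 b1' = Comp C m3 b3" "Comp C m2 c2' = Comp C m3 c3"
    using cube j1 j2 unfolding cube_commutes_def by auto
  have sAB: "Dom C a = Dom C b" "Cod C a = Dom C a1" "Cod C b = Dom C b1" "a \<in> Mor C" "b \<in> Mor C"
     "c \<in> Mor C" "Cod C c = Dom C c2" "b3 \<in> Mor C" "c3 \<in> Mor C" "Cod C b = Dom C b3" "Cod C c = Dom C c3"
     "Cod C b3 = Cod C c3" "a1 \<in> Mor C" "a2 \<in> Mor C" "b1 \<in> Mor C" "c2 \<in> Mor C"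
    using sA sB sC unfolding comm_square_def by auto
  obtain r1 e1 where E1: "Ind m1 j1 r1 e1"
    using ex[unfolded existence_def, rule_format, OF m(1) j1(1)] m by blast
  have s1: "r1 \<in> Mor C" "e1 \<in> Mor C" "Dom C r1 = Cod C m1" "Dom C e1 = Cod C j1" "Cod C r1 = Cod C e1"
     "Comp C r1 m1 = Comp C e1 j1" using sq[OF E1] unfolding comm_square_def by auto
  have rm2: "Comp C r1 m2 \<in> Mor C" "Dom C (Comp C r1 m2) = Dom C j2" "Cod C (Comp C r1 m2) = Cod C r1"
    using s1 m by auto
  obtain r2 e2 where E2: "Ind (Comp C r1 m2) j2 r2 e2"
    using ex[unfolded existence_def, rule_format, OF rm2(1) j2(1)] rm2 by blast
  have s2: "r2 \<in> Mor C" "e2 \<in> Mor C" "Dom C r2 = Cod C r1" "Dom C e2 = Cod C j2" "Cod C r2 = Cod C e2"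
     "Comp C r2 (Comp C r1 m2) = Comp C e2 j2" using sq[OF E2] rm2 unfolding comm_square_def by auto
  define n1 where "n1 = Comp C r2 e1"
  define n2 where "n2 = e2"
  define n3 where "n3 = Comp C r2 (Comp C r1 m3)"
  have X1: "Comp C e1 (Comp C j1 w) = Comp C r1 (Comp C m1 w)" if "w \<in> Mor C" "Cod C w = Dom C j1" for w
    using ext2[OF s1(6)[symmetric] that(1) j1(1) s1(2) m(1) s1(1)] that s1 m by simp
  have X2: "Comp C r2 (Comp C r1 (Comp C m2 w)) = Comp C e2 (Comp C j2 w)" if "w \<in> Mor C" "Cod C w = Dom C j2" for w
  proof -
    have "Comp C r2 (Comp C r1 (Comp C m2 w)) = Comp C r2 (Comp C (Comp C r1 m2) w)"
      using ra[OF that(1) m(2) s1(1)] that m s1 by simp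
    also have "\<dots> = Comp C e2 (Comp C j2 w)"
      using ext2[OF s2(6) that(1) rm2(1) s2(1) j2(1) s2(2)] that rm2 s2 by simp
    finally show ?thesis .
  qed
  have cc: "cube_commutes C a1 b1 a2 c2 b3 c3 n1 n2 n3"
    unfolding cube_commutes_def
  proof (intro conjI)
    show n1M: "n1 \<in> Mor C" unfolding n1_def using s1 s2 by simp
    show n2M: "n2 \<in> Mor C" unfolding n2_def using s2 by simp
    show n3M: "n3 \<in> Mor C" unfolding n3_def using s1 s2 m by simp
    show "Dom C n1 = Cod C a1" unfolding n1_def using s1 s2 j1 cC[OF j1(2) j1(1) j1(4)] by simp
    show "Dom C n2 = Cod C a2" unfolding n2_def using s2 j2 cC[OF j2(2) j2(1) j2(4)] by simp
    show "Dom C n3 = Cod C b3" unfolding n3_def using s1 s2 m by simp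
    show "Cod C n1 = Cod C n2" unfolding n1_def n2_def using s1 s2 by simp
    show "Cod C n2 = Cod C n3" unfolding n3_def n2_def using s1 s2 m by simp
    have "Comp C n1 a1 = Comp C r2 (Comp C e1 (Comp C j1 a1'))"
      unfolding n1_def using ra[OF cM[OF j1(2) j1(1) j1(4)] s1(2) s2(1)] j1 s1 s2 cC[OF j1(2) j1(1) j1(4)] by simp
    also have "\<dots> = Comp C r2 (Comp C r1 (Comp C m2 a2'))" using X1[of a1'] j1 m by simp
    also have "\<dots> = Comp C n2 a2" using X2[of a2'] j2 unfolding n2_def by simp
    finally show "Comp C n1 a1 = Comp C n2 a2" .
    have "Comp C n1 b1 = Comp C r2 (Comp C e1 (Comp C j1 b1'))"
      unfolding n1_def using ra[OF cM[OF j1(3) j1(1) j1(5)] s1(2) s2(1)] j1 s1 s2 cC[OF j1(3) j1(1) j1(5)] by simp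
    also have "\<dots> = Comp C r2 (Comp C r1 (Comp C m3 b3))" using X1[of b1'] j1 m by simp
    also have "\<dots> = Comp C n3 b3" unfolding n3_def
      using ra[OF sAB(8) m(3) s1(1)] ra[OF sAB(8) _ s2(1)] m s1 s2 by simp
    finally show "Comp C n1 b1 = Comp C n3 b3" .
    have "Comp C n2 c2 = Comp C r2 (Comp C r1 (Comp C m2 c2'))"
      unfolding n2_def using X2[of c2'] j2 by simp
    also have "\<dots> = Comp C n3 c3" unfolding n3_def
      using ra[OF sAB(9) m(3) s1(1)] ra[OF sAB(9) _ s2(1)] m s1 s2 sAB by simp
    finally show "Comp C n2 c2 = Comp C n3 c3" .
  qed
  have FA: "Ind a1 a2 n1 n2"
  proof -
    have "Ind a2' (Comp C j1 a1') (Comp C r1 m2) e1" using trans[OF sym[OF fA] E1] .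
    hence "Ind a1 a2' e1 (Comp C r1 m2)" using j1 sym by simp
    from trans[OF this E2] show ?thesis using j2 unfolding n1_def n2_def by simp
  qed
  have FB: "Ind b1 b3 n1 n3"
  proof -
    have "Ind b3 (Comp C j1 b1') (Comp C r1 m3) e1" using trans[OF sym[OF fB] E1] .
    hence "Ind b3 b1 (Comp C r1 m3) e1" using j1 by simp
    hence "Ind b3 b1 (Comp C r2 (Comp C r1 m3)) (Comp C r2 e1)"
      using invr s1 s2 m by simp
    thus ?thesis using sym unfolding n1_def n3_def by blast
  qed
  have FC: "Ind c2 c3 n2 n3"
  proof -
    have "Ind c2' c3 (Comp C r1 m2) (Comp C r1 m3)" using invr[OF fC] s1 m by simp
    hence "Ind c3 (Comp C j2 c2') (Comp C r2 (Comp C r1 m3)) e2" using trans[OF sym E2] by blast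
    thus ?thesis using j2 sym unfolding n2_def n3_def by simp
  qed
  show "\<exists>n1 n2 n3. cube_commutes C a1 b1 a2 c2 b3 c3 n1 n2 n3 \<and> Ind a b a1 b1 \<and> Ind a c a2 c2 \<and>
     Ind b c b3 c3 \<and> Ind a1 a2 n1 n2 \<and> Ind b1 b3 n1 n3 \<and> Ind c2 c3 n2 n3"
    by (intro exI[of _ n1] exI[of _ n2] exI[of _ n3] conjI cc A B Cc FA FB FC)
qed

end

theorem theorem6p2:
  fixes C :: "('o, 'm) cat" and Ind :: "'m \<Rightarrow> 'm \<Rightarrow> 'm \<Rightarrow> 'm \<Rightarrow> bool"
  assumes "category C"
    and "all_mono C"
    and "has_binary_joins C"
    and "indep_relation C Ind"
    and "invariance C Ind"
    and "monotonicity C Ind"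
    and "transitivity C Ind"
    and "symmetry C Ind"
    and "existence C Ind"
    and "base_monotonicity C Ind"
    and "three_amalgamation C Ind"
  shows "strong_three_amalgamation C Ind"
proof -
  interpret S C Ind using assms by unfold_locales
  show ?thesis by (rule main)
qed

end
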